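(* Let $X$ be a finite $T_0$ space and $Y=X\circledast\mathbb{S}^0$ its non-Hausdorff suspension. Then $\mathrm{TC}(Y)=1$ if $X$ is contractible, and $\mathrm{TC}(Y)=4$ if $X$ is not contractible.
   Context: Finite $T_0$ spaces are identified with finite posets ($x^\downarrow=\{y:y\le x\}$ is the minimal open neighborhood of $x$; open sets are the down-closed sets). The non-Hausdorff join $A\circledast B$ of finite $T_0$ spaces $A,B$ is the disjoint union $A\sqcup B$ with the orders of $A$ and $B$ kept and additionally $a\le b$ for all $a\in A$, $b\in B$. $\mathbb{S}^0=\{x_0,y_0\}$ is the two-point discrete space, and $X\circledast\mathbb{S}^0$ is the non-Hausdorff suspension. Topological complexity is unreduced: for path-connected $Y$, with $\pi:Y^I\to Y\times Y$, $\gamma\mapsto(\gamma(0),\gamma(1))$ ($Y^I$ with compact-open topology), $\mathrm{TC}(Y)$ is the minimal $k$ such that $Y\times Y$ is covered by $k$ open sets each admitting a continuous section of $\pi$. *)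

theory Defs
  imports "HOL-Analysis.Analysis" "HOL-Library.FuncSet"
begin

text \<open>The underlying set is the
disjoint union; for finite T0 spaces (= finite posets with the down-set topology)
the down-closed sets of the join order (orders of A and B kept, a \<le> b for all
a in A, b in B) are exactly the sets U whose traces on A and on B are open and
which contain all of A as soon as they meet B.\<close>

definition nh_join :: "'a topology \<Rightarrow> 'b topology \<Rightarrow> ('a + 'b) topology" where
  "nh_join A B = topology (\<lambda>U. U \<subseteq> Inl ` topspace A \<union> Inr ` topspace B
      \<and> openin A (Inl -` U) \<and> openin B (Inr -` U)
      \<and> (Inr -` U \<noteq> {} \<longrightarrow> topspace A \<subseteq> Inl -` U))"

definition S0 :: "bool topology" where
  "S0 = discrete_topology UNIV"

definition nh_suspension :: "'a topology \<Rightarrow> ('a + bool) topology" where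
  "nh_suspension X = nh_join X S0"

text \<open>Free path space Y^I with the compact-open topology.  Paths are represented
as functions on [0,1], extensional (value undefined outside [0,1]).\<close>
definition path_carrier :: "'a topology \<Rightarrow> (real \<Rightarrow> 'a) set" where
  "path_carrier Y = {g. continuous_map (top_of_set {0..1}) Y g \<and> g \<in> extensional {0..1}}"

definition path_space :: "'a topology \<Rightarrow> (real \<Rightarrow> 'a) topology" where
  "path_space Y = topology_generated_by
     {{g \<in> path_carrier Y. g ` K \<subseteq> V} | K V. compact K \<and> K \<subseteq> {0..1} \<and> openin Y V}"

definition has_motion_planner :: "'a topology \<Rightarrow> ('a \<times> 'a) set \<Rightarrow> bool" where
  "has_motion_planner Y U \<longleftrightarrow>
     (\<exists>s. continuous_map (subtopology (prod_topology Y Y) U) (path_space Y) s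
          \<and> (\<forall>p\<in>U. s p 0 = fst p \<and> s p 1 = snd p))"

definition tc_cover :: "'a topology \<Rightarrow> nat \<Rightarrow> bool" where
  "tc_cover Y k \<longleftrightarrow>
     (\<exists>U :: nat \<Rightarrow> ('a \<times> 'a) set.
        (\<forall>i<k. openin (prod_topology Y Y) (U i) \<and> has_motion_planner Y (U i))
        \<and> topspace (prod_topology Y Y) \<subseteq> (\<Union>i<k. U i))"

text \<open>Unreduced topological complexity.\<close>
definition TC :: "'a topology \<Rightarrow> nat" where
  "TC Y = (LEAST k. tc_cover Y k)"

end

theory Submission
  imports Defs
begin


definition sle :: "'a topology \<Rightarrow> 'a \<Rightarrow> 'a \<Rightarrow> bool" where
  "sle T x y \<longleftrightarrow> (\<forall>V. openin T V \<longrightarrow> y \<in> V \<longrightarrow> x \<in> V)"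

lemma sle_refl[simp]: "sle T x x" by (simp add: sle_def)

lemma sle_trans: "sle T x y \<Longrightarrow> sle T y z \<Longrightarrow> sle T x z" by (auto simp: sle_def)

lemma sle_antisym:
  assumes "t0_space T" "x \<in> topspace T" "y \<in> topspace T" "sle T x y" "sle T y x"
  shows "x = y"
  using assms unfolding t0_space_def sle_def by metis

lemma t0_space_sleI:
  assumes "\<And>x y. x \<in> topspace T \<Longrightarrow> y \<in> topspace T \<Longrightarrow> sle T x y \<Longrightarrow> sle T y x \<Longrightarrow> x = y"
  shows "t0_space T"
  unfolding t0_space_def
proof (intro ballI impI)
  fix x y assume xy: "x \<in> topspace T" "y \<in> topspace T" "x \<noteq> y"
  then have "\<not> sle T x y \<or> \<not> sle T y x" using assms by blast
  then show "\<exists>U. openin T U \<and> (x \<notin> U) = (y \<in> U)"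
    unfolding sle_def by blast
qed

lemma sle_subtopology:
  assumes "x \<in> S" "y \<in> S"
  shows "sle (subtopology T S) x y \<longleftrightarrow> sle T x y"
  using assms unfolding sle_def openin_subtopology by blast

lemma continuous_map_sle:
  assumes "continuous_map X Y f" "y \<in> topspace X" "sle X x y"
  shows "sle Y (f x) (f y)"
  unfolding sle_def
proof (intro allI impI)
  fix V assume V: "openin Y V" "f y \<in> V"
  have "openin X {z \<in> topspace X. f z \<in> V}"
    using assms(1) V(1) by (simp add: continuous_map_def)
  moreover have "y \<in> {z \<in> topspace X. f z \<in> V}" using V assms(2) by simp
  ultimately have "x \<in> {z \<in> topspace X. f z \<in> V}" using assms(3) unfolding sle_def by blast
  then show "f x \<in> V" by simp
qed

definition mo :: "'a topology \<Rightarrow> 'a \<Rightarrow> 'a set" where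
  "mo T x = {y \<in> topspace T. sle T y x}"

lemma openin_mo:
  assumes "finite (topspace T)" "x \<in> topspace T"
  shows "openin T (mo T x)"
proof -
  let ?F = "{V. openin T V \<and> x \<in> V}"
  have "?F \<subseteq> Pow (topspace T)" using openin_subset by auto
  then have fin: "finite ?F" using assms(1) finite_subset by blast
  have ne: "?F \<noteq> {}" using assms(2) by auto
  have "openin T (\<Inter>?F)" using fin ne by (rule openin_Inter) auto
  moreover have "\<Inter>?F = mo T x"
    unfolding mo_def sle_def using assms(2) by auto
  ultimately show ?thesis by simp
qed

lemma continuous_map_finite_mono:
  assumes fin: "finite (topspace X)" and f: "f \<in> topspace X \<rightarrow> topspace Y"
    and mono: "\<And>x y. x \<in> topspace X \<Longrightarrow> y \<in> topspace X \<Longrightarrow> sle X x y \<Longrightarrow> sle Y (f x) (f y)"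
  shows "continuous_map X Y f"
  unfolding continuous_map_def
proof (intro conjI allI impI)
  show "f \<in> topspace X \<rightarrow> topspace Y" by fact
  fix U assume U: "openin Y U"
  let ?S = "{x \<in> topspace X. f x \<in> U}"
  have "?S = (\<Union>x\<in>?S. mo X x)"
  proof
    show "?S \<subseteq> (\<Union>x\<in>?S. mo X x)" by (auto simp: mo_def)
    show "(\<Union>x\<in>?S. mo X x) \<subseteq> ?S"
    proof
      fix y assume "y \<in> (\<Union>x\<in>?S. mo X x)"
      then obtain x where x: "x \<in> ?S" "y \<in> topspace X" "sle X y x" by (auto simp: mo_def)
      then have "sle Y (f y) (f x)" using mono by blast
      then show "y \<in> ?S" using x U unfolding sle_def by blast
    qed
  qed
  moreover have "openin X (\<Union>x\<in>?S. mo X x)"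
    using fin by (intro openin_Union) (auto intro: openin_mo)
  ultimately show "openin X ?S" by simp
qed

lemma homotopic_sle:
  assumes f: "continuous_map W Z f" and g: "continuous_map W Z g"
    and le: "\<And>w. w \<in> topspace W \<Longrightarrow> sle Z (f w) (g w)"
  shows "homotopic_with (\<lambda>x. True) W Z f g"
  unfolding homotopic_with_def
proof (intro exI conjI allI ballI)
  let ?h = "\<lambda>(t::real,x). if t = 1 then g x else f x"
  show "?h (0, x) = f x" for x by simp
  show "?h (1, x) = g x" for x by simp
  show "True" by simp
  show "continuous_map (prod_topology (top_of_set {0..1}) W) Z ?h"
    unfolding continuous_map_def
  proof (intro conjI allI impI)
    show "?h \<in> topspace (prod_topology (top_of_set {0..1}) W) \<rightarrow> topspace Z"
      using f g by (auto simp: continuous_map_def)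
    fix U assume U: "openin Z U"
    have e: "{x \<in> topspace (prod_topology (top_of_set {0..1}) W). ?h x \<in> U}
        = ({0..<1} \<times> {x \<in> topspace W. f x \<in> U}) \<union> ({0..1} \<times> {x \<in> topspace W. g x \<in> U})"
    proof -
      have "\<And>x. x \<in> topspace W \<Longrightarrow> g x \<in> U \<Longrightarrow> f x \<in> U"
        using le U unfolding sle_def by blast
      then show ?thesis by (auto simp: split: if_splits)
    qed
    have o1: "openin (top_of_set {0..1}) {0..<(1::real)}"
    proof -
      have "{0..<(1::real)} = {0..1} \<inter> {..<1}" by auto
      then show ?thesis by (metis open_lessThan openin_open_Int inf_commute)
    qed
    have o2: "openin W {x \<in> topspace W. f x \<in> U}" "openin W {x \<in> topspace W. g x \<in> U}"
      using f g U by (auto simp: continuous_map_def)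
    show "openin (prod_topology (top_of_set {0..1}) W)
        {x \<in> topspace (prod_topology (top_of_set {0..1}) W). ?h x \<in> U}"
      unfolding e
    proof (intro openin_Un openin_prod_Times_iff[THEN iffD2] disjI2 conjI o1 o2)
      show "openin (top_of_set {0..1::real}) {0..1}"
        by (metis openin_topspace topspace_euclidean_subtopology)
    qed
  qed
qed



definition cmp :: "'a topology \<Rightarrow> 'b topology \<Rightarrow> ('a \<Rightarrow> 'b) \<Rightarrow> ('a \<Rightarrow> 'b) \<Rightarrow> bool" where
  "cmp W Z f g \<longleftrightarrow> continuous_map W Z f \<and> continuous_map W Z g \<and>
     ((\<forall>w\<in>topspace W. sle Z (f w) (g w)) \<or> (\<forall>w\<in>topspace W. sle Z (g w) (f w)))"

lemma uniform_eps:
  assumes "finite A" "\<And>a. a \<in> A \<Longrightarrow> \<exists>e>0. Q a e"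
    and mono: "\<And>a e e'. Q a e \<Longrightarrow> 0 < e' \<Longrightarrow> e' \<le> e \<Longrightarrow> Q a e'"
  shows "\<exists>e>(0::real). \<forall>a\<in>A. Q a e"
proof -
  obtain E where E: "\<And>a. a \<in> A \<Longrightarrow> E a > 0 \<and> Q a (E a)" using assms(2) by metis
  define e where "e = Min (insert 1 (E ` A))"
  have "e > 0" unfolding e_def using assms(1) E by (subst Min_gr_iff) auto
  moreover have "\<forall>a\<in>A. Q a e"
  proof
    fix a assume a: "a \<in> A"
    have "e \<le> E a" unfolding e_def using assms(1) a by (intro Min_le) auto
    then show "Q a e" using mono E a \<open>e > 0\<close> by blast
  qed
  ultimately show ?thesis by blast
qed

lemma homotopic_fence:
  assumes finW: "finite (topspace W)" and finZ: "finite (topspace Z)"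
    and hom: "homotopic_with (\<lambda>x. True) W Z f g"
  shows "(cmp W Z)\<^sup>*\<^sup>* f g"
proof -
  obtain h where conth: "continuous_map (prod_topology (top_of_set {0..1::real}) W) Z h"
    and h0: "\<And>x. h (0, x) = f x" and h1: "\<And>x. h (1, x) = g x"
    using hom unfolding homotopic_with_def by blast
  define H where "H t = (\<lambda>x. h (t, x))" for t
  have H0: "H 0 = f" and H1: "H 1 = g" using h0 h1 by (auto simp: H_def)
  have contH: "continuous_map W Z (H t)" if "t \<in> {0..1}" for t
  proof -
    have "continuous_map W Z (h \<circ> Pair t)"
      using continuous_map_o_Pair[OF conth] that by simp
    then show ?thesis by (simp add: H_def o_def)
  qed
  have local: "\<exists>e>0. \<forall>t'\<in>{0..1}. dist t' t < e \<longrightarrow> (\<forall>w\<in>topspace W. sle Z (H t' w) (H t w))"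
    if t: "t \<in> {0..1}" for t
  proof -
    define Q where "Q w e \<longleftrightarrow> (\<forall>t'\<in>{0..1}. dist t' t < e \<longrightarrow> sle Z (H t' w) (H t w))" for w and e :: real
    have ex: "\<exists>e>0. Q w e" if w: "w \<in> topspace W" for w
    proof -
      have htw: "h (t, w) \<in> topspace Z"
        using conth t w by (auto simp: continuous_map_def)
      define P where "P = {x \<in> topspace (prod_topology (top_of_set {0..1}) W). h x \<in> mo Z (h (t, w))}"
      have "openin Z (mo Z (h (t, w)))" using openin_mo[OF finZ htw] .
      then have oP: "openin (prod_topology (top_of_set {0..1}) W) P"
        using conth unfolding P_def continuous_map_def by blast
      have mP: "(t, w) \<in> P"
        using t w htw by (simp add: mo_def P_def)
      have "\<exists>U V. openin (top_of_set {0..1}) U \<and> openin W V \<and> t \<in> U \<and> w \<in> V \<and> U \<times> V \<subseteq> P"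
        using oP mP unfolding openin_prod_topology_alt by simp
      then obtain U V where UV: "openin (top_of_set {0..1}) U" "w \<in> V" "t \<in> U" "U \<times> V \<subseteq> P"
        by blast
      have "\<exists>e>0. \<forall>x'\<in>{0..1}. dist x' t < e \<longrightarrow> x' \<in> U"
        using UV(1,3) unfolding openin_euclidean_subtopology_iff by simp
      then obtain e where e: "e > 0" "\<And>x'. x' \<in> {0..1} \<Longrightarrow> dist x' t < e \<Longrightarrow> x' \<in> U"
        by blast
      have "Q w e" unfolding Q_def
      proof (intro ballI impI)
        fix t' assume "t' \<in> {0..1}" "dist t' t < e"
        then have "t' \<in> U" using e by blast
        then have "(t', w) \<in> U \<times> V" using UV(2) by simp
        then have "(t', w) \<in> P" by (rule subsetD[OF UV(4)])
        then have "h (t', w) \<in> mo Z (h (t, w))" by (simp add: P_def)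
        then show "sle Z (H t' w) (H t w)" by (simp add: mo_def H_def)
      qed
      then show ?thesis using e(1) by blast
    qed
    have mono: "Q w e'" if "Q w e" "0 < e'" "e' \<le> e" for w e e'
      using that unfolding Q_def by force
    have "\<exists>e>0. \<forall>w\<in>topspace W. Q w e"
      by (rule uniform_eps[of "topspace W" Q, OF finW ex mono])
    then obtain e where e: "e > 0" "\<And>w. w \<in> topspace W \<Longrightarrow> Q w e"
      by blast
    show ?thesis
    proof (intro exI conjI ballI impI)
      show "e > 0" by (rule e(1))
      fix t' w assume "t' \<in> {0..1}" "dist t' t < e" "w \<in> topspace W"
      then show "sle Z (H t' w) (H t w)" using e(2) unfolding Q_def by blast
    qed
  qed
  define S where "S = {t \<in> {0..1::real}. (cmp W Z)\<^sup>*\<^sup>* f (H t)}"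
  have openS: "openin (top_of_set {0..1}) S"
    unfolding openin_euclidean_subtopology_iff
  proof (intro conjI ballI)
    show "S \<subseteq> {0..1}" by (auto simp: S_def)
    fix t assume tS: "t \<in> S"
    then have t: "t \<in> {0..1}" by (auto simp: S_def)
    obtain e where e: "e > 0" "\<forall>t'\<in>{0..1}. dist t' t < e \<longrightarrow> (\<forall>w\<in>topspace W. sle Z (H t' w) (H t w))"
      using local[OF t] by blast
    show "\<exists>e>0. \<forall>x'\<in>{0..1}. dist x' t < e \<longrightarrow> x' \<in> S"
    proof (intro exI conjI ballI impI)
      show "e > 0" by fact
      fix t' assume t': "t' \<in> {0..1}" "dist t' t < e"
      have "cmp W Z (H t) (H t')" unfolding cmp_def using contH t t' e by blast
      moreover have "(cmp W Z)\<^sup>*\<^sup>* f (H t)" using tS unfolding S_def by blast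
      ultimately have "(cmp W Z)\<^sup>*\<^sup>* f (H t')" by (metis rtranclp.rtrancl_into_rtrancl)
      then show "t' \<in> S" using t' by (simp add: S_def)
    qed
  qed
  have openS': "openin (top_of_set {0..1}) ({0..1} - S)"
    unfolding openin_euclidean_subtopology_iff
  proof (intro conjI ballI)
    show "{0..1} - S \<subseteq> {0..1}" by auto
    fix t assume tS: "t \<in> {0..1} - S"
    then have t: "t \<in> {0..1}" by auto
    obtain e where e: "e > 0" "\<forall>t'\<in>{0..1}. dist t' t < e \<longrightarrow> (\<forall>w\<in>topspace W. sle Z (H t' w) (H t w))"
      using local[OF t] by blast
    show "\<exists>e>0. \<forall>x'\<in>{0..1}. dist x' t < e \<longrightarrow> x' \<in> {0..1} - S"
    proof (intro exI conjI ballI impI)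
      show "e > 0" by fact
      fix t' assume t': "t' \<in> {0..1}" "dist t' t < e"
      have "t' \<notin> S"
      proof
        assume "t' \<in> S"
        moreover have "cmp W Z (H t') (H t)" unfolding cmp_def using contH t t' e by blast
        ultimately have "(cmp W Z)\<^sup>*\<^sup>* f (H t)"
          unfolding S_def by (metis (no_types, lifting) mem_Collect_eq rtranclp.rtrancl_into_rtrancl)
        then have "t \<in> S" using t unfolding S_def by blast
        then show False using tS by blast
      qed
      then show "t' \<in> {0..1} - S" using t' by blast
    qed
  qed
  have "closedin (top_of_set {0..1}) S"
    unfolding closedin_def using openS' by (auto simp: S_def)
  moreover have "connected {0..1::real}" by simp
  ultimately have "S = {} \<or> S = {0..1}"
    using openS unfolding connected_clopen by blast
  moreover have "0 \<in> S" by (simp add: S_def H0)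
  ultimately have "1 \<in> S" by auto
  then show ?thesis by (simp add: S_def H1)
qed

definition beat :: "'a topology \<Rightarrow> 'a \<Rightarrow> bool" where
  "beat T p \<longleftrightarrow> p \<in> topspace T \<and> (\<exists>m\<in>topspace T. m \<noteq> p \<and>
     ((sle T m p \<and> (\<forall>y\<in>topspace T. sle T y p \<and> y \<noteq> p \<longrightarrow> sle T y m)) \<or>
      (sle T p m \<and> (\<forall>y\<in>topspace T. sle T p y \<and> y \<noteq> p \<longrightarrow> sle T m y))))"

lemma minimal_below:
  assumes fin: "finite (topspace T)" and t0: "t0_space T" and nb: "\<And>p. \<not> beat T p"
    and f: "continuous_map T T f" and le: "\<And>x. x \<in> topspace T \<Longrightarrow> sle T (f x) x"
  shows "x \<in> topspace T \<Longrightarrow> f x = x"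
proof (induction "card (mo T x)" arbitrary: x rule: less_induct)
  case less
  have fx: "f x \<in> topspace T" using f less.prems by (auto simp: continuous_map_def)
  have below: "f y = y" if y: "y \<in> topspace T" "sle T y x" "y \<noteq> x" for y
  proof -
    have "mo T y \<subseteq> mo T x" using y by (auto simp: mo_def intro: sle_trans)
    moreover have "x \<notin> mo T y" using y less.prems sle_antisym[OF t0] by (auto simp: mo_def)
    moreover have "x \<in> mo T x" using less.prems by (simp add: mo_def)
    ultimately have "mo T y \<subset> mo T x" by blast
    then have "card (mo T y) < card (mo T x)"
    proof (rule psubset_card_mono[rotated])
      show "finite (mo T x)" by (rule finite_subset[OF _ fin]) (auto simp: mo_def)
    qed
    then show ?thesis using less.hyps y by blast
  qed
  show ?case
  proof (rule ccontr)
    assume ne: "f x \<noteq> x"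
    have "\<forall>y\<in>topspace T. sle T y x \<and> y \<noteq> x \<longrightarrow> sle T y (f x)"
    proof (intro ballI impI)
      fix y assume y: "y \<in> topspace T" "sle T y x \<and> y \<noteq> x"
      have "sle T (f y) (f x)" using continuous_map_sle[OF f less.prems] y by blast
      then show "sle T y (f x)" using below y by simp
    qed
    then have "beat T x" unfolding beat_def
      by (intro conjI bexI[of _ "f x"] disjI1) (use less.prems fx ne le[OF less.prems] in auto)
    then show False using nb by blast
  qed
qed

lemma minimal_above:
  assumes fin: "finite (topspace T)" and t0: "t0_space T" and nb: "\<And>p. \<not> beat T p"
    and f: "continuous_map T T f" and le: "\<And>x. x \<in> topspace T \<Longrightarrow> sle T x (f x)"
  shows "x \<in> topspace T \<Longrightarrow> f x = x"
proof (induction "card {y \<in> topspace T. sle T x y}" arbitrary: x rule: less_induct)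
  case less
  have fx: "f x \<in> topspace T" using f less.prems by (auto simp: continuous_map_def)
  have above: "f y = y" if y: "y \<in> topspace T" "sle T x y" "y \<noteq> x" for y
  proof -
    have "{z \<in> topspace T. sle T y z} \<subseteq> {z \<in> topspace T. sle T x z}" using y by (auto intro: sle_trans)
    moreover have "x \<notin> {z \<in> topspace T. sle T y z}" using y less.prems sle_antisym[OF t0] by auto
    moreover have "x \<in> {z \<in> topspace T. sle T x z}" using less.prems by simp
    ultimately have "{z \<in> topspace T. sle T y z} \<subset> {z \<in> topspace T. sle T x z}" by blast
    then have "card {z \<in> topspace T. sle T y z} < card {z \<in> topspace T. sle T x z}"
      using fin by (intro psubset_card_mono) auto
    then show ?thesis using less.hyps y by blast
  qed
  show ?case
  proof (rule ccontr)
    assume ne: "f x \<noteq> x"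
    have "\<forall>y\<in>topspace T. sle T x y \<and> y \<noteq> x \<longrightarrow> sle T (f x) y"
    proof (intro ballI impI)
      fix y assume y: "y \<in> topspace T" "sle T x y \<and> y \<noteq> x"
      have "sle T (f x) (f y)" using continuous_map_sle[OF f y(1)] y by blast
      then show "sle T (f x) y" using above y by simp
    qed
    then have "beat T x" unfolding beat_def
      by (intro conjI bexI[of _ "f x"] disjI2) (use less.prems fx ne le[OF less.prems] in auto)
    then show False using nb by blast
  qed
qed

lemma fence_id:
  assumes fin: "finite (topspace T)" and t0: "t0_space T" and nb: "\<And>p. \<not> beat T p"
    and fe: "(cmp T T)\<^sup>*\<^sup>* id g"
  shows "\<forall>x\<in>topspace T. g x = x"
  using fe
proof (induction rule: rtranclp_induct)
  case base
  then show ?case by simp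
next
  case (step h k)
  have contk: "continuous_map T T k" using step.hyps(2) by (simp add: cmp_def)
  have d: "(\<forall>w\<in>topspace T. sle T (h w) (k w)) \<or> (\<forall>w\<in>topspace T. sle T (k w) (h w))"
    using step.hyps(2) unfolding cmp_def by blast
  then have "(\<forall>w\<in>topspace T. sle T w (k w)) \<or> (\<forall>w\<in>topspace T. sle T (k w) w)"
    using step.IH by simp
  then show ?case
  proof
    assume "\<forall>w\<in>topspace T. sle T w (k w)"
    then show ?case using minimal_above[OF fin t0 nb contk] by blast
  next
    assume "\<forall>w\<in>topspace T. sle T (k w) w"
    then show ?case using minimal_below[OF fin t0 nb contk] by blast
  qed
qed

lemma minimal_contractible:
  assumes fin: "finite (topspace T)" and t0: "t0_space T" and nb: "\<And>p. \<not> beat T p"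
    and c: "contractible_space T"
  shows "\<exists>c. topspace T \<subseteq> {c}"
proof -
  obtain c where "homotopic_with (\<lambda>x. True) T T id (\<lambda>x. c)"
    using c unfolding contractible_space_def by blast
  then have "(cmp T T)\<^sup>*\<^sup>* id (\<lambda>x. c)" using homotopic_fence fin by blast
  then have "\<forall>x\<in>topspace T. c = x" using fence_id[OF fin t0 nb] by blast
  then have "topspace T \<subseteq> {c}" by auto
  then show ?thesis by blast
qed

lemma beat_equiv:
  assumes fin: "finite (topspace T)" and t0: "t0_space T" and bp: "beat T p"
  shows "T homotopy_equivalent_space subtopology T (topspace T - {p})"
proof -
  let ?S = "subtopology T (topspace T - {p})"
  have tS: "topspace ?S = topspace T - {p}" by auto
  from bp obtain m where m: "m \<in> topspace T" "m \<noteq> p" and p: "p \<in> topspace T"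
    and cases: "(sle T m p \<and> (\<forall>y\<in>topspace T. sle T y p \<and> y \<noteq> p \<longrightarrow> sle T y m)) \<or>
      (sle T p m \<and> (\<forall>y\<in>topspace T. sle T p y \<and> y \<noteq> p \<longrightarrow> sle T m y))"
    unfolding beat_def by blast
  define r where "r z = (if z = p then m else z)" for z
  have rmono: "sle T (r x) (r y)" if "x \<in> topspace T" "y \<in> topspace T" "sle T x y" for x y
    using cases that unfolding r_def by (auto intro: sle_trans)
  have contr: "continuous_map T ?S r"
  proof (rule continuous_map_finite_mono[OF fin])
    show "r \<in> topspace T \<rightarrow> topspace ?S" using m by (auto simp: r_def)
    fix x y assume xy: "x \<in> topspace T" "y \<in> topspace T" "sle T x y"
    have "r x \<in> topspace T - {p}" "r y \<in> topspace T - {p}" using xy m by (auto simp: r_def)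
    then show "sle ?S (r x) (r y)" using sle_subtopology rmono[OF xy] by metis
  qed
  have contr': "continuous_map T T r" using continuous_map_into_fulltopology[OF contr] .
  have conti: "continuous_map ?S T id" by (simp add: continuous_map_from_subtopology)
  have h1: "homotopic_with (\<lambda>x. True) ?S ?S (r \<circ> id) id"
    by (rule homotopic_with_equal) (use continuous_map_from_subtopology[OF contr] in \<open>auto simp: r_def\<close>)
  have h2: "homotopic_with (\<lambda>x. True) T T (id \<circ> r) id"
  proof (cases "sle T m p \<and> (\<forall>y\<in>topspace T. sle T y p \<and> y \<noteq> p \<longrightarrow> sle T y m)")
    case True
    then show ?thesis using homotopic_sle[OF contr' continuous_map_id] by (auto simp: r_def)
  next
    case False
    then have "sle T p m" using cases by blast
    then have "homotopic_with (\<lambda>x. True) T T id r"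
      using homotopic_sle[OF continuous_map_id contr'] by (auto simp: r_def)
    then show ?thesis using homotopic_with_sym by fastforce
  qed
  show ?thesis unfolding homotopy_equivalent_space_def
    using contr conti h1 h2 by blast
qed



lemma finite_maximal:
  assumes "finite S" "S \<noteq> {}"
    and "\<And>x y z. x \<in> S \<Longrightarrow> y \<in> S \<Longrightarrow> z \<in> S \<Longrightarrow> R x y \<Longrightarrow> R y z \<Longrightarrow> R x z"
    and "\<And>x y. x \<in> S \<Longrightarrow> y \<in> S \<Longrightarrow> R x y \<Longrightarrow> R y x \<Longrightarrow> x = y"
  shows "\<exists>y\<in>S. \<forall>z\<in>S. R y z \<longrightarrow> z = y"
  using assms
proof (induction S rule: finite_ne_induct)
  case (singleton x)
  then show ?case by auto
next
  case (insert x F)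
  have "\<exists>y\<in>F. \<forall>z\<in>F. R y z \<longrightarrow> z = y"
    by (rule insert.IH) (use insert.prems in blast)+
  then obtain y where y: "y \<in> F" "\<forall>z\<in>F. R y z \<longrightarrow> z = y" by blast
  show ?case
  proof (cases "R y x")
    case True
    have "\<forall>z\<in>insert x F. R x z \<longrightarrow> z = x"
    proof (intro ballI impI)
      fix z assume z: "z \<in> insert x F" "R x z"
      show "z = x"
      proof (cases "z = x")
        case False
        then have zF: "z \<in> F" using z by blast
        have "R y z" using insert.prems(1)[of y x z] True z y zF by blast
        then have "z = y" using y zF by blast
        then show ?thesis using insert.prems(2)[of x y] True z y by blast
      qed
    qed
    then show ?thesis by blast
  next
    case False
    then show ?thesis using y by blast
  qed
qed

lemma has_max_beat:
  assumes fin: "finite (topspace T)" and t0: "t0_space T" and m: "m \<in> topspace T"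
    and mx: "\<And>y. y \<in> topspace T \<Longrightarrow> sle T y m" and two: "\<exists>y\<in>topspace T. y \<noteq> m"
  shows "\<exists>q. beat T q"
proof -
  have "\<exists>y\<in>topspace T - {m}. \<forall>z\<in>topspace T - {m}. sle T y z \<longrightarrow> z = y"
  proof (rule finite_maximal)
    show "finite (topspace T - {m})" using fin by simp
    show "topspace T - {m} \<noteq> {}" using two by blast
    show "sle T x z" if "sle T x y" "sle T y z" for x y z using that by (rule sle_trans)
    show "x = y" if "x \<in> topspace T - {m}" "y \<in> topspace T - {m}" "sle T x y" "sle T y x" for x y
      using sle_antisym[OF t0] that by blast
  qed
  then obtain y where y: "y \<in> topspace T" "y \<noteq> m" "\<And>z. z \<in> topspace T \<Longrightarrow> z \<noteq> m \<Longrightarrow> sle T y z \<Longrightarrow> z = y"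
    by blast
  have "beat T y" unfolding beat_def
  proof (intro conjI bexI[of _ m] disjI2)
    show "y \<in> topspace T" "m \<in> topspace T" "m \<noteq> y" "sle T y m" using y m mx by auto
    show "\<forall>z\<in>topspace T. sle T y z \<and> z \<noteq> y \<longrightarrow> sle T m z"
      using y by fastforce
  qed
  then show ?thesis by blast
qed

lemma susp_main:
  assumes "finite (topspace Z)" "t0_space Z" "a \<in> topspace Z" "b \<in> topspace Z" "a \<noteq> b"
    "\<not> sle Z a b" "\<not> sle Z b a"
    "\<And>z. z \<in> topspace Z \<Longrightarrow> z \<noteq> a \<Longrightarrow> z \<noteq> b \<Longrightarrow> sle Z z a \<and> sle Z z b"
    "topspace Z - {a,b} \<noteq> {}"
  shows "contractible_space (subtopology Z (topspace Z - {a,b})) \<longleftrightarrow> contractible_space Z"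
  using assms
proof (induction "card (topspace Z)" arbitrary: Z rule: less_induct)
  case less
  note fin = less.prems(1) and t0 = less.prems(2) and aZ = less.prems(3) and bZ = less.prems(4)
    and ab = less.prems(5) and nab = less.prems(6) and nba = less.prems(7)
    and below = less.prems(8) and ne = less.prems(9)
  define Xs where "Xs = topspace Z - {a,b}"
  let ?XT = "subtopology Z Xs"
  have tXT: "topspace ?XT = Xs" by (auto simp: Xs_def)
  have finX: "finite (topspace ?XT)" using fin by (simp add: tXT Xs_def)
  have t0X: "t0_space ?XT" using t0 by (rule t0_space_subtopology)
  have slX: "sle ?XT x y \<longleftrightarrow> sle Z x y" if "x \<in> Xs" "y \<in> Xs" for x y
    using sle_subtopology that by metis
  have belowX: "sle Z x a" "sle Z x b" if "x \<in> Xs" for x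
    using below that unfolding Xs_def by auto
  have amax: "z = a" if "z \<in> topspace Z" "sle Z a z" for z
  proof (cases "z = a \<or> z = b")
    case True
    then show ?thesis using that nab by blast
  next
    case False
    then show ?thesis using below[of z] that sle_antisym[OF t0] aZ by blast
  qed
  have bmax: "z = b" if "z \<in> topspace Z" "sle Z b z" for z
  proof (cases "z = a \<or> z = b")
    case True
    then show ?thesis using that nba by blast
  next
    case False
    then show ?thesis using below[of z] that sle_antisym[OF t0] bZ by blast
  qed
  have XtoZ: "beat Z p" if bp: "beat ?XT p" for p
  proof -
    from bp obtain m where pX: "p \<in> Xs" and mX: "m \<in> Xs" and mp: "m \<noteq> p"
      and cs: "(sle ?XT m p \<and> (\<forall>y\<in>Xs. sle ?XT y p \<and> y \<noteq> p \<longrightarrow> sle ?XT y m)) \<or>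
      (sle ?XT p m \<and> (\<forall>y\<in>Xs. sle ?XT p y \<and> y \<noteq> p \<longrightarrow> sle ?XT m y))"
      unfolding beat_def tXT by blast
    have pZ: "p \<in> topspace Z" and mZ: "m \<in> topspace Z" using pX mX by (auto simp: Xs_def)
    have pa: "p \<noteq> a" "p \<noteq> b" using pX by (auto simp: Xs_def)
    show ?thesis
    proof (cases "sle ?XT m p \<and> (\<forall>y\<in>Xs. sle ?XT y p \<and> y \<noteq> p \<longrightarrow> sle ?XT y m)")
      case True
      have "\<forall>y\<in>topspace Z. sle Z y p \<and> y \<noteq> p \<longrightarrow> sle Z y m"
      proof (intro ballI impI)
        fix y assume y: "y \<in> topspace Z" "sle Z y p \<and> y \<noteq> p"
        have "y \<noteq> a" using y amax[of p] pZ pa by blast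
        moreover have "y \<noteq> b" using y bmax[of p] pZ pa by blast
        ultimately have "y \<in> Xs" using y by (auto simp: Xs_def)
        then show "sle Z y m" using True y slX pX mX by blast
      qed
      then show ?thesis unfolding beat_def using pZ mZ mp True slX pX mX by blast
    next
      case False
      then have c2: "sle Z p m" "\<forall>y\<in>Xs. sle Z p y \<and> y \<noteq> p \<longrightarrow> sle Z m y"
        using cs slX pX mX by auto
      have "\<forall>y\<in>topspace Z. sle Z p y \<and> y \<noteq> p \<longrightarrow> sle Z m y"
      proof (intro ballI impI)
        fix y assume y: "y \<in> topspace Z" "sle Z p y \<and> y \<noteq> p"
        show "sle Z m y"
        proof (cases "y \<in> Xs")
          case True
          then show ?thesis using c2 y by blast
        next
          case False
          then have "y = a \<or> y = b" using y by (auto simp: Xs_def)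
          then show ?thesis using belowX[OF mX] by blast
        qed
      qed
      then show ?thesis unfolding beat_def using pZ mZ mp c2 by blast
    qed
  qed
  have ZtoX: "beat ?XT p" if pX: "p \<in> Xs" and bp: "beat Z p" for p
  proof -
    from bp obtain m where mZ: "m \<in> topspace Z" and mp: "m \<noteq> p"
      and cs: "(sle Z m p \<and> (\<forall>y\<in>topspace Z. sle Z y p \<and> y \<noteq> p \<longrightarrow> sle Z y m)) \<or>
      (sle Z p m \<and> (\<forall>y\<in>topspace Z. sle Z p y \<and> y \<noteq> p \<longrightarrow> sle Z m y))"
      unfolding beat_def by blast
    have pZ: "p \<in> topspace Z" and pa: "p \<noteq> a" "p \<noteq> b" using pX by (auto simp: Xs_def)
    have XZ: "y \<in> Xs \<Longrightarrow> y \<in> topspace Z" for y by (auto simp: Xs_def)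
    show ?thesis
    proof (cases "sle Z m p \<and> (\<forall>y\<in>topspace Z. sle Z y p \<and> y \<noteq> p \<longrightarrow> sle Z y m)")
      case True
      have "m \<noteq> a" using True amax[of p] pZ pa by blast
      moreover have "m \<noteq> b" using True bmax[of p] pZ pa by blast
      ultimately have mX: "m \<in> Xs" using mZ by (auto simp: Xs_def)
      show ?thesis unfolding beat_def tXT
        using True pX mX mp slX XZ by (intro conjI bexI[of _ m]) auto
    next
      case False
      then have c2: "sle Z p m" "\<forall>y\<in>topspace Z. sle Z p y \<and> y \<noteq> p \<longrightarrow> sle Z m y"
        using cs by auto
      have "m \<noteq> a"
      proof
        assume "m = a"
        then have "sle Z a b" using c2 belowX[OF pX] bZ pa by blast
        then show False using nab by blast
      qed
      moreover have "m \<noteq> b"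
      proof
        assume "m = b"
        then have "sle Z b a" using c2 belowX[OF pX] aZ pa by blast
        then show False using nba by blast
      qed
      ultimately have mX: "m \<in> Xs" using mZ by (auto simp: Xs_def)
      show ?thesis unfolding beat_def tXT
        using c2 pX mX mp slX XZ by (intro conjI bexI[of _ m]) auto
    qed
  qed
  show ?case
  proof (cases "\<exists>p. beat ?XT p")
    case True
    then obtain p where p: "beat ?XT p" by blast
    then have pX: "p \<in> Xs" using tXT unfolding beat_def by blast
    obtain m' where m': "m' \<in> Xs" "m' \<noteq> p" using p tXT unfolding beat_def by blast
    have pZ: "p \<in> topspace Z" and pa: "p \<noteq> a" "p \<noteq> b" using pX by (auto simp: Xs_def)
    define Z' where "Z' = subtopology Z (topspace Z - {p})"
    have tZ': "topspace Z' = topspace Z - {p}" by (auto simp: Z'_def)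
    have card: "card (topspace Z') < card (topspace Z)"
      unfolding tZ' by (rule card_Diff1_less[OF fin pZ])
    have sl': "sle Z' x y \<longleftrightarrow> sle Z x y" if "x \<in> topspace Z'" "y \<in> topspace Z'" for x y
      using sle_subtopology[of x "topspace Z - {p}" y Z] that unfolding tZ' Z'_def by simp
    have IH: "contractible_space (subtopology Z' (topspace Z' - {a,b})) \<longleftrightarrow> contractible_space Z'"
    proof (rule less.hyps[OF card])
      show "finite (topspace Z')" using fin by (simp add: tZ')
      show "t0_space Z'" unfolding Z'_def using t0 by (rule t0_space_subtopology)
      show aZ': "a \<in> topspace Z'" and bZ': "b \<in> topspace Z'" using aZ bZ pa by (auto simp: tZ')
      show "a \<noteq> b" by fact
      show "\<not> sle Z' a b" "\<not> sle Z' b a" using nab nba sl' aZ' bZ' by auto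
      show "sle Z' z a \<and> sle Z' z b" if "z \<in> topspace Z'" "z \<noteq> a" "z \<noteq> b" for z
        using below[of z] that sl' aZ' bZ' tZ' by auto
      show "topspace Z' - {a, b} \<noteq> {}" using m' tZ' by (auto simp: Xs_def)
    qed
    have s1: "(topspace Z - {p}) \<inter> (topspace Z - {p} - {a,b}) = Xs - {p}" by (auto simp: Xs_def)
    have eq1: "subtopology Z' (topspace Z' - {a,b}) = subtopology Z (Xs - {p})"
      unfolding tZ' unfolding Z'_def subtopology_subtopology s1 ..
    have s2: "Xs \<inter> (Xs - {p}) = Xs - {p}" by auto
    have eq2: "subtopology ?XT (topspace ?XT - {p}) = subtopology Z (Xs - {p})"
      unfolding tXT subtopology_subtopology s2 ..
    have e1: "Z homotopy_equivalent_space Z'"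
      unfolding Z'_def using beat_equiv[OF fin t0 XtoZ[OF p]] .
    have e2: "?XT homotopy_equivalent_space subtopology ?XT (topspace ?XT - {p})"
      using beat_equiv[OF finX t0X p] .
    have c1: "contractible_space Z \<longleftrightarrow> contractible_space Z'"
      using homotopy_equivalent_space_contractibility[OF e1] .
    have c2: "contractible_space ?XT \<longleftrightarrow> contractible_space (subtopology Z (Xs - {p}))"
      using homotopy_equivalent_space_contractibility[OF e2[unfolded eq2]] .
    have c3: "contractible_space (subtopology Z (Xs - {p})) \<longleftrightarrow> contractible_space Z'"
      using IH unfolding eq1 .
    show ?thesis unfolding Xs_def[symmetric] using c1 c2 c3 by blast
  next
    case False
    then have nb: "\<And>p. \<not> beat ?XT p" by blast
    show ?thesis
    proof (cases "\<exists>x0. Xs = {x0}")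
      case True
      then obtain x0 where x0: "Xs = {x0}" by blast
      have c1: "contractible_space ?XT"
        by (rule contractible_space_subset_singleton[of _ x0]) (simp add: tXT x0)
      have x0Z: "x0 \<in> topspace Z" using x0 by (auto simp: Xs_def)
      have "homotopic_with (\<lambda>x. True) Z Z (\<lambda>x. x0) id"
      proof (rule homotopic_sle)
        show "continuous_map Z Z (\<lambda>x. x0)" using x0Z by simp
        show "continuous_map Z Z id" by simp
        fix w assume w: "w \<in> topspace Z"
        show "sle Z x0 (id w)"
        proof (cases "w \<in> Xs")
          case True
          then show ?thesis using x0 by simp
        next
          case False
          then have "w = a \<or> w = b" using w by (auto simp: Xs_def)
          then show ?thesis using belowX[of x0] x0 by auto
        qed
      qed
      then have c2: "contractible_space Z"
        unfolding contractible_space_def using homotopic_with_sym by blast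
      show ?thesis unfolding Xs_def[symmetric] using c1 c2 by blast
    next
      case False
      then obtain x0 x1 where x01: "x0 \<in> Xs" "x1 \<in> Xs" "x0 \<noteq> x1" using ne Xs_def by blast
      have n1: "\<not> contractible_space ?XT"
      proof
        assume "contractible_space ?XT"
        then obtain c where "topspace ?XT \<subseteq> {c}" using minimal_contractible[OF finX t0X nb] by blast
        then show False using x01 tXT by blast
      qed
      have endp: "\<not> beat Z q" if q: "q = a \<or> q = b" for q
      proof
        assume bq: "beat Z q"
        have qZ: "q \<in> topspace Z" using q aZ bZ by blast
        have qmax: "z = q" if "z \<in> topspace Z" "sle Z q z" for z
          using q that amax bmax by blast
        from bq obtain m where mZ: "m \<in> topspace Z" and mq: "m \<noteq> q"
          and cs: "(sle Z m q \<and> (\<forall>y\<in>topspace Z. sle Z y q \<and> y \<noteq> q \<longrightarrow> sle Z y m)) \<or>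
            (sle Z q m \<and> (\<forall>y\<in>topspace Z. sle Z q y \<and> y \<noteq> q \<longrightarrow> sle Z m y))"
          unfolding beat_def by blast
        have c1: "sle Z m q" "\<forall>y\<in>topspace Z. sle Z y q \<and> y \<noteq> q \<longrightarrow> sle Z y m"
          using cs qmax mZ mq by blast+
        have "m \<noteq> a \<and> m \<noteq> b" using c1 q mq nab nba by blast
        then have mX: "m \<in> Xs" using mZ by (auto simp: Xs_def)
        have "\<exists>q'. beat ?XT q'"
        proof (rule has_max_beat[OF finX t0X])
          show "m \<in> topspace ?XT" using mX tXT by simp
          show "\<exists>y\<in>topspace ?XT. y \<noteq> m" unfolding tXT using x01 by (cases "x0 = m") auto
          fix y assume "y \<in> topspace ?XT"
          then have yX: "y \<in> Xs" using tXT by simp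
          then have "y \<noteq> q" "y \<in> topspace Z" using q by (auto simp: Xs_def)
          moreover have "sle Z y q" using belowX[OF yX] q by blast
          ultimately have "sle Z y m" using c1 by blast
          then show "sle ?XT y m" using slX yX mX by blast
        qed
        then show False using nb by blast
      qed
      have nbZ: "\<not> beat Z p" for p
      proof
        assume bp: "beat Z p"
        then have "p \<in> topspace Z" unfolding beat_def by blast
        then show False
        proof (cases "p \<in> Xs")
          case True
          then show False using ZtoX[OF True bp] nb by blast
        next
          case False
          then show False using endp[of p] bp \<open>p \<in> topspace Z\<close> by (auto simp: Xs_def)
        qed
      qed
      have n2: "\<not> contractible_space Z"
      proof
        assume "contractible_space Z"
        then obtain c where "topspace Z \<subseteq> {c}" using minimal_contractible[OF fin t0 nbZ] by blast
        then show False using aZ bZ ab by blast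
      qed
      show ?thesis unfolding Xs_def[symmetric] using n1 n2 by blast
    qed
  qed
qed



lemma istopology_nh_join:
  "istopology (\<lambda>U. U \<subseteq> Inl ` topspace A \<union> Inr ` topspace B
      \<and> openin A (Inl -` U) \<and> openin B (Inr -` U)
      \<and> (Inr -` U \<noteq> {} \<longrightarrow> topspace A \<subseteq> Inl -` U))"
  unfolding istopology_def
proof (rule conjI; (intro allI impI)?)
  fix S T :: "('a + 'b) set"
  assume S: "S \<subseteq> Inl ` topspace A \<union> Inr ` topspace B \<and> openin A (Inl -` S) \<and> openin B (Inr -` S)
      \<and> (Inr -` S \<noteq> {} \<longrightarrow> topspace A \<subseteq> Inl -` S)"
    and T: "T \<subseteq> Inl ` topspace A \<union> Inr ` topspace B \<and> openin A (Inl -` T) \<and> openin B (Inr -` T)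
      \<and> (Inr -` T \<noteq> {} \<longrightarrow> topspace A \<subseteq> Inl -` T)"
  show "S \<inter> T \<subseteq> Inl ` topspace A \<union> Inr ` topspace B \<and> openin A (Inl -` (S \<inter> T)) \<and> openin B (Inr -` (S \<inter> T))
      \<and> (Inr -` (S \<inter> T) \<noteq> {} \<longrightarrow> topspace A \<subseteq> Inl -` (S \<inter> T))"
  proof (intro conjI impI)
    show "S \<inter> T \<subseteq> Inl ` topspace A \<union> Inr ` topspace B" using S by blast
    show "openin A (Inl -` (S \<inter> T))" using S T by (simp add: vimage_Int openin_Int)
    show "openin B (Inr -` (S \<inter> T))" using S T by (simp add: vimage_Int openin_Int)
    assume "Inr -` (S \<inter> T) \<noteq> {}"
    then show "topspace A \<subseteq> Inl -` (S \<inter> T)" using S T by blast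
  qed
next
  fix K :: "('a + 'b) set set"
  assume K: "\<forall>S\<in>K. S \<subseteq> Inl ` topspace A \<union> Inr ` topspace B \<and> openin A (Inl -` S) \<and> openin B (Inr -` S)
      \<and> (Inr -` S \<noteq> {} \<longrightarrow> topspace A \<subseteq> Inl -` S)"
  show "\<Union>K \<subseteq> Inl ` topspace A \<union> Inr ` topspace B \<and> openin A (Inl -` \<Union>K) \<and> openin B (Inr -` \<Union>K)
      \<and> (Inr -` \<Union>K \<noteq> {} \<longrightarrow> topspace A \<subseteq> Inl -` \<Union>K)"
  proof (intro conjI impI)
    show "\<Union>K \<subseteq> Inl ` topspace A \<union> Inr ` topspace B" using K by blast
    have "Inl -` \<Union>K = \<Union>((\<lambda>S. Inl -` S) ` K)" by auto
    moreover have "openin A (\<Union>((\<lambda>S. Inl -` S) ` K))" using K by (intro openin_Union) auto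
    ultimately show "openin A (Inl -` \<Union>K)" by simp
    have "Inr -` \<Union>K = \<Union>((\<lambda>S. Inr -` S) ` K)" by auto
    moreover have "openin B (\<Union>((\<lambda>S. Inr -` S) ` K))" using K by (intro openin_Union) auto
    ultimately show "openin B (Inr -` \<Union>K)" by simp
    assume "Inr -` \<Union>K \<noteq> {}"
    then obtain S where "S \<in> K" "Inr -` S \<noteq> {}" by blast
    then show "topspace A \<subseteq> Inl -` \<Union>K" using K by blast
  qed
qed

lemma openin_nh_join:
  "openin (nh_join A B) U \<longleftrightarrow> U \<subseteq> Inl ` topspace A \<union> Inr ` topspace B
      \<and> openin A (Inl -` U) \<and> openin B (Inr -` U)
      \<and> (Inr -` U \<noteq> {} \<longrightarrow> topspace A \<subseteq> Inl -` U)"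
  unfolding nh_join_def by (simp only: topology_inverse'[OF istopology_nh_join])

lemma topspace_nh_join: "topspace (nh_join A B) = Inl ` topspace A \<union> Inr ` topspace B"
proof
  show "topspace (nh_join A B) \<subseteq> Inl ` topspace A \<union> Inr ` topspace B"
    using openin_topspace[of "nh_join A B"] unfolding openin_nh_join by blast
  have "openin (nh_join A B) (Inl ` topspace A \<union> Inr ` topspace B)"
    unfolding openin_nh_join
  proof (intro conjI impI)
    have "Inl -` (Inl ` topspace A \<union> Inr ` topspace B) = topspace A" by auto
    then show "openin A (Inl -` (Inl ` topspace A \<union> Inr ` topspace B))" by simp
    have "Inr -` (Inl ` topspace A \<union> Inr ` topspace B) = topspace B" by auto
    then show "openin B (Inr -` (Inl ` topspace A \<union> Inr ` topspace B))" by simp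
  qed auto
  then show "Inl ` topspace A \<union> Inr ` topspace B \<subseteq> topspace (nh_join A B)"
    by (rule openin_subset)
qed

lemma topspace_susp: "topspace (nh_suspension X) = Inl ` topspace X \<union> range Inr"
  by (simp add: nh_suspension_def topspace_nh_join S0_def)

lemma openin_susp: "openin (nh_suspension X) U \<longleftrightarrow> U \<subseteq> Inl ` topspace X \<union> range Inr
      \<and> openin X (Inl -` U) \<and> (Inr -` U \<noteq> {} \<longrightarrow> topspace X \<subseteq> Inl -` U)"
  by (simp add: nh_suspension_def openin_nh_join S0_def)

lemma sle_susp_ll: "sle (nh_suspension X) (Inl x) (Inl y) \<longleftrightarrow> sle X x y"
proof
  assume a: "sle (nh_suspension X) (Inl x) (Inl y)"
  show "sle X x y" unfolding sle_def
  proof (intro allI impI)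
    fix V assume V: "openin X V" "y \<in> V"
    have "openin (nh_suspension X) (Inl ` V)"
      unfolding openin_susp using V openin_subset[OF V(1)]
      by (auto simp: inj_vimage_image_eq)
    then have "Inl x \<in> Inl ` V" using a V unfolding sle_def by blast
    then show "x \<in> V" by auto
  qed
next
  assume a: "sle X x y"
  show "sle (nh_suspension X) (Inl x) (Inl y)" unfolding sle_def
  proof (intro allI impI)
    fix W assume W: "openin (nh_suspension X) W" "Inl y \<in> W"
    then have "openin X (Inl -` W)" "y \<in> Inl -` W" unfolding openin_susp by auto
    then have "x \<in> Inl -` W" using a unfolding sle_def by blast
    then show "Inl x \<in> W" by simp
  qed
qed

lemma sle_susp_lr: "x \<in> topspace X \<Longrightarrow> sle (nh_suspension X) (Inl x) (Inr u)"
  unfolding sle_def openin_susp by blast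

lemma sle_susp_rl: "x \<in> topspace X \<Longrightarrow> \<not> sle (nh_suspension X) (Inr u) (Inl x)"
proof
  assume x: "x \<in> topspace X" and s: "sle (nh_suspension X) (Inr u) (Inl x)"
  have "openin (nh_suspension X) (Inl ` topspace X)"
    unfolding openin_susp by (auto simp: inj_vimage_image_eq)
  then show False using s x unfolding sle_def by blast
qed

lemma sle_susp_rr: "sle (nh_suspension X) (Inr u) (Inr v) \<longleftrightarrow> u = v"
proof
  assume s: "sle (nh_suspension X) (Inr u) (Inr v)"
  have "openin (nh_suspension X) (Inl ` topspace X \<union> {Inr v})"
    unfolding openin_susp
  proof (intro conjI impI)
    have "Inl -` (Inl ` topspace X \<union> {Inr v}) = topspace X" by auto
    then show "openin X (Inl -` (Inl ` topspace X \<union> {Inr v}))" by simp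
  qed auto
  then show "u = v" using s unfolding sle_def by blast
qed simp

lemma finite_susp: "finite (topspace X) \<Longrightarrow> finite (topspace (nh_suspension X))"
  by (simp add: topspace_susp)

lemma t0_susp:
  assumes "t0_space X"
  shows "t0_space (nh_suspension X)"
proof (rule t0_space_sleI)
  fix p q assume p: "p \<in> topspace (nh_suspension X)" and q: "q \<in> topspace (nh_suspension X)"
    and pq: "sle (nh_suspension X) p q" and qp: "sle (nh_suspension X) q p"
  show "p = q"
  proof (cases p)
    case (Inl x)
    then have x: "x \<in> topspace X" using p by (auto simp: topspace_susp)
    show ?thesis
    proof (cases q)
      case (Inl y)
      then have y: "y \<in> topspace X" using q by (auto simp: topspace_susp)
      have "x = y" using sle_antisym[OF assms x y] pq qp \<open>p = Inl x\<close> Inl sle_susp_ll by metis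
      then show ?thesis using \<open>p = Inl x\<close> Inl by simp
    next
      case (Inr v)
      then show ?thesis using qp \<open>p = Inl x\<close> sle_susp_rl[OF x] by simp
    qed
  next
    case (Inr u)
    show ?thesis
    proof (cases q)
      case (Inl y)
      then have y: "y \<in> topspace X" using q by (auto simp: topspace_susp)
      then show ?thesis using pq Inr Inl sle_susp_rl[OF y] by simp
    next
      case (Inr v)
      then show ?thesis using pq by (simp add: \<open>p = Inr u\<close> sle_susp_rr)
    qed
  qed
qed

lemma homeomorphic_susp_base:
  assumes fin: "finite (topspace X)"
  shows "X homeomorphic_space subtopology (nh_suspension X) (Inl ` topspace X)"
  unfolding homeomorphic_space_def homeomorphic_maps_def
proof (intro exI conjI)
  let ?S = "subtopology (nh_suspension X) (Inl ` topspace X)"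
  have tS: "topspace ?S = Inl ` topspace X" by (auto simp: topspace_susp)
  have slS: "sle ?S (Inl x) (Inl y) \<longleftrightarrow> sle X x y" if "x \<in> topspace X" "y \<in> topspace X" for x y
  proof -
    have "sle ?S (Inl x) (Inl y) \<longleftrightarrow> sle (nh_suspension X) (Inl x) (Inl y)"
      by (rule sle_subtopology) (use that in auto)
    then show ?thesis by (simp add: sle_susp_ll)
  qed
  show "continuous_map X ?S Inl"
    by (rule continuous_map_finite_mono[OF fin]) (auto simp: tS slS topspace_susp)
  show "continuous_map ?S X projl"
  proof (rule continuous_map_finite_mono)
    show "finite (topspace ?S)" using fin by (simp add: tS)
    show "projl \<in> topspace ?S \<rightarrow> topspace X" by (auto simp: tS)
    fix p q assume "p \<in> topspace ?S" "q \<in> topspace ?S" "sle ?S p q"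
    then show "sle X (projl p) (projl q)" by (auto simp: tS slS)
  qed
  show "\<forall>x\<in>topspace X. projl (Inl x) = x" by simp
  show "\<forall>y\<in>topspace ?S. Inl (projl y) = y" by (auto simp: tS)
qed

lemma susp_contractible:
  assumes fin: "finite (topspace X)" and ne: "topspace X \<noteq> {}" and t0: "t0_space X"
  shows "contractible_space (nh_suspension X) \<longleftrightarrow> contractible_space X"
proof -
  let ?Y = "nh_suspension X"
  have eq: "topspace ?Y - {Inr False, Inr True} = Inl ` topspace X"
    by (auto simp: topspace_susp)
  have "contractible_space (subtopology ?Y (topspace ?Y - {Inr False, Inr True})) \<longleftrightarrow> contractible_space ?Y"
  proof (rule susp_main)
    show "finite (topspace ?Y)" using fin by (rule finite_susp)
    show "t0_space ?Y" using t0 by (rule t0_susp)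
    show "Inr False \<in> topspace ?Y" "Inr True \<in> topspace ?Y" by (auto simp: topspace_susp)
    show "Inr False \<noteq> Inr True" by simp
    show "\<not> sle ?Y (Inr False) (Inr True)" "\<not> sle ?Y (Inr True) (Inr False)" by (simp_all add: sle_susp_rr)
    fix z assume "z \<in> topspace ?Y" "z \<noteq> Inr False" "z \<noteq> Inr True"
    then obtain x where "z = Inl x" "x \<in> topspace X" by (auto simp: topspace_susp)
    then show "sle ?Y z (Inr False) \<and> sle ?Y z (Inr True)" by (simp add: sle_susp_lr)
  next
    show "topspace ?Y - {Inr False, Inr True} \<noteq> {}" using ne eq by simp
  qed
  moreover have "contractible_space (subtopology ?Y (Inl ` topspace X)) \<longleftrightarrow> contractible_space X"
    using homeomorphic_space_contractibility[OF homeomorphic_susp_base[OF fin]] by simp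
  ultimately show ?thesis using eq by simp
qed



lemma topspace_path_space: "topspace (path_space Y) = path_carrier Y"
proof -
  have "\<Union>{{g \<in> path_carrier Y. g ` K \<subseteq> V} | K V. compact K \<and> K \<subseteq> {0..1} \<and> openin Y V} = path_carrier Y"
  proof
    show "\<Union>{{g \<in> path_carrier Y. g ` K \<subseteq> V} | K V. compact K \<and> K \<subseteq> {0..1} \<and> openin Y V} \<subseteq> path_carrier Y"
      by blast
    have "{g \<in> path_carrier Y. g ` {} \<subseteq> topspace Y} \<in>
        {{g \<in> path_carrier Y. g ` K \<subseteq> V} | K V. compact K \<and> K \<subseteq> {0..1} \<and> openin Y V}"
      by blast
    then show "path_carrier Y \<subseteq> \<Union>{{g \<in> path_carrier Y. g ` K \<subseteq> V} | K V. compact K \<and> K \<subseteq> {0..1} \<and> openin Y V}"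
      by auto
  qed
  then show ?thesis unfolding path_space_def by simp
qed

lemma openin_path_basic:
  assumes "compact K" "K \<subseteq> {0..1}" "openin Y V"
  shows "openin (path_space Y) {g \<in> path_carrier Y. g ` K \<subseteq> V}"
  unfolding path_space_def openin_topology_generated_by_iff
  by (rule generate_topology_on.Basis) (use assms in blast)

lemma planner_homotopic:
  assumes "has_motion_planner Y U"
  shows "homotopic_with (\<lambda>x. True) (subtopology (prod_topology Y Y) U) Y fst snd"
proof -
  let ?P = "subtopology (prod_topology Y Y) U"
  let ?T = "prod_topology (top_of_set {0..1::real}) ?P"
  obtain s where conts: "continuous_map ?P (path_space Y) s"
    and s01: "\<And>p. p \<in> U \<Longrightarrow> s p 0 = fst p \<and> s p 1 = snd p"
    using assms unfolding has_motion_planner_def by blast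
  define h where "h = (\<lambda>(t::real, p). s p t)"
  have sp: "continuous_map (top_of_set {0..1}) Y (s p)" if "p \<in> topspace ?P" for p
  proof -
    have "s p \<in> topspace (path_space Y)" using continuous_map_funspace[OF conts] that by (rule funcset_mem)
    then show ?thesis by (simp add: topspace_path_space path_carrier_def)
  qed
  have conth: "continuous_map (?T) Y h"
    unfolding continuous_map_def
  proof (intro conjI allI impI)
    show "h \<in> topspace (?T) \<rightarrow> topspace Y"
    proof
      fix x assume "x \<in> topspace (?T)"
      then obtain t p where x: "x = (t, p)" "t \<in> {0..1}" "p \<in> topspace ?P" by auto
      have "s p t \<in> topspace Y" using continuous_map_funspace[OF sp[OF x(3)]] x(2) by (simp add: Pi_iff)
      then show "h x \<in> topspace Y" using x(1) by (simp add: h_def)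
    qed
    fix V assume V: "openin Y V"
    show "openin (?T) {x \<in> topspace (?T). h x \<in> V}"
      unfolding openin_prod_topology_alt
    proof (intro allI impI)
      fix t p assume tp: "(t, p) \<in> {x \<in> topspace (?T). h x \<in> V}"
      then have t: "t \<in> {0..1}" and p: "p \<in> topspace ?P" and stV: "s p t \<in> V" by (auto simp: h_def)
      have o1: "openin (top_of_set {0..1}) {t' \<in> topspace (top_of_set {0..1::real}). s p t' \<in> V}"
        using openin_continuous_map_preimage[OF sp[OF p] V] .
      have o2: "{t' \<in> topspace (top_of_set {0..1::real}). s p t' \<in> V} = {t' \<in> {0..1}. s p t' \<in> V}"
        by simp
      have o3: "\<forall>x\<in>{t' \<in> {0..1}. s p t' \<in> V}. \<exists>e>0. \<forall>x'\<in>{0..1}. dist x' x < e \<longrightarrow> x' \<in> {t' \<in> {0..1}. s p t' \<in> V}"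
        using o1[unfolded o2 openin_euclidean_subtopology_iff] by (rule conjunct2)
      have mt: "t \<in> {t' \<in> {0..1}. s p t' \<in> V}" using t stV by simp
      obtain e where e0: "e > 0" and e1: "\<forall>x'\<in>{0..1}. dist x' t < e \<longrightarrow> x' \<in> {t' \<in> {0..1}. s p t' \<in> V}"
        using o3[rule_format, OF mt] by blast
      have e: "e > 0" "\<And>t'. t' \<in> {0..1} \<Longrightarrow> dist t' t < e \<Longrightarrow> s p t' \<in> V"
        using e0 e1 by auto
      define K where "K = {t - e/2 .. t + e/2} \<inter> {0..1}"
      have cK: "compact K" unfolding K_def by (intro compact_Int_closed) auto
      have K01: "K \<subseteq> {0..1}" by (auto simp: K_def)
      have KV: "s p ` K \<subseteq> V"
      proof
        fix y assume "y \<in> s p ` K"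
        then obtain t' where t': "t' \<in> K" "y = s p t'" by blast
        then have "dist t' t < e" using e(1) by (auto simp: K_def dist_real_def)
        then show "y \<in> V" using e(2) t' K01 by blast
      qed
      let ?B = "{g \<in> path_carrier Y. g ` K \<subseteq> V}"
      have oB: "openin (path_space Y) ?B" using openin_path_basic[OF cK K01 V] .
      let ?N = "{q \<in> topspace ?P. s q \<in> ?B}"
      have oN: "openin ?P ?N" using openin_continuous_map_preimage[OF conts oB] .
      have spc: "s q \<in> path_carrier Y" if "q \<in> topspace ?P" for q
        using funcset_mem[OF continuous_map_funspace[OF conts] that] by (simp add: topspace_path_space)
      have pN: "p \<in> ?N" using p spc[OF p] KV by simp
      let ?O = "{0..1} \<inter> ball t (e/2)"
      have oO: "openin (top_of_set {0..1}) ?O" by (rule openin_open_Int) simp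
      have tO: "t \<in> ?O" using t e(1) by simp
      have sub: "?O \<times> ?N \<subseteq> {x \<in> topspace (?T). h x \<in> V}"
      proof
        fix x assume "x \<in> ?O \<times> ?N"
        then obtain t' q where x: "x = (t', q)" "t' \<in> {0..1}" "t' \<in> ball t (e/2)" "q \<in> topspace ?P"
          "s q ` K \<subseteq> V" by auto
        have "t' \<in> K" using x(2,3) by (auto simp: K_def dist_real_def abs_if split: if_splits)
        then have "s q t' \<in> V" using x(5) by blast
        then show "x \<in> {x \<in> topspace (?T). h x \<in> V}"
          using x by (simp add: h_def)
      qed
      show "\<exists>U' V'. openin (top_of_set {0..1}) U' \<and> openin ?P V' \<and> t \<in> U' \<and> p \<in> V' \<and> U' \<times> V' \<subseteq>
            {x \<in> topspace (?T). h x \<in> V}"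
        by (intro exI[of _ ?O] exI[of _ ?N] conjI oO oN tO pN sub)
    qed
  qed
  define h' where "h' = (\<lambda>(t::real, p). if t = 0 then fst p else if t = 1 then snd p else h (t, p))"
  have conth': "continuous_map ?T Y h'"
  proof (rule continuous_map_eq[OF conth])
    fix x assume "x \<in> topspace ?T"
    then obtain t p where x: "x = (t, p)" "p \<in> U" by auto
    show "h x = h' x" using s01[OF x(2)] by (simp add: x h_def h'_def)
  qed
  show ?thesis unfolding homotopic_with_def
    by (intro exI[of _ h'] conjI conth' allI ballI) (simp_all add: h'_def)
qed

lemma homotopic_planner:
  assumes fin: "finite (topspace Y)"
    and hom: "homotopic_with (\<lambda>x. True) (subtopology (prod_topology Y Y) U) Y fst snd"
  shows "has_motion_planner Y U"
proof -
  let ?P = "subtopology (prod_topology Y Y) U"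
  let ?T = "prod_topology (top_of_set {0..1::real}) ?P"
  let ?S = "{{g \<in> path_carrier Y. g ` K \<subseteq> V} | K V. compact K \<and> K \<subseteq> {0..1} \<and> openin Y V}"
  obtain h where conth: "continuous_map ?T Y h"
    and h0: "\<And>x. h (0, x) = fst x" and h1: "\<And>x. h (1, x) = snd x"
    using hom unfolding homotopic_with_def by blast
  define s where "s p = restrict (\<lambda>t. h (t, p)) {0..1}" for p
  have finP: "finite (topspace ?P)"
  proof (rule finite_subset)
    show "topspace ?P \<subseteq> topspace Y \<times> topspace Y" by auto
    show "finite (topspace Y \<times> topspace Y)" using fin by simp
  qed
  have sp: "s p \<in> path_carrier Y" if p: "p \<in> topspace ?P" for p
  proof -
    have c1: "continuous_map (top_of_set {0..1::real}) (top_of_set {0..1}) (\<lambda>t. t)"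
      using continuous_map_id[unfolded id_def] .
    have c2: "continuous_map (top_of_set {0..1::real}) ?P (\<lambda>t. p)" using p by simp
    have "continuous_map (top_of_set {0..1}) ?T (\<lambda>t. (t, p))"
      using continuous_map_pairedI[OF c1 c2] .
    then have "continuous_map (top_of_set {0..1}) Y (h \<circ> (\<lambda>t. (t, p)))"
      using conth by (rule continuous_map_compose)
    then have "continuous_map (top_of_set {0..1}) Y (s p)"
      by (rule continuous_map_eq) (simp add: s_def)
    then show ?thesis by (simp add: path_carrier_def s_def)
  qed
  have pre: "openin ?P {p \<in> topspace ?P. s p \<in> G}" if "generate_topology_on ?S G" for G
    using that
  proof (induction rule: generate_topology_on.induct)
    case Empty
    then show ?case by simp
  next
    case (Int a b)
    have "{p \<in> topspace ?P. s p \<in> a \<inter> b} = {p \<in> topspace ?P. s p \<in> a} \<inter> {p \<in> topspace ?P. s p \<in> b}"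
      by auto
    then show ?case using Int.IH by (simp add: openin_Int)
  next
    case (UN K)
    have "{p \<in> topspace ?P. s p \<in> \<Union>K} = (\<Union>k\<in>K. {p \<in> topspace ?P. s p \<in> k})" by auto
    moreover have "openin ?P (\<Union>k\<in>K. {p \<in> topspace ?P. s p \<in> k})"
      using UN.IH by (intro openin_Union) auto
    ultimately show ?case by simp
  next
    case (Basis G)
    then obtain K V where G: "G = {g \<in> path_carrier Y. g ` K \<subseteq> V}" and K: "compact K" "K \<subseteq> {0..1}"
      and V: "openin Y V" by blast
    have pe: "s p \<in> G \<longleftrightarrow> (\<forall>t\<in>K. h (t, p) \<in> V)" if p: "p \<in> topspace ?P" for p
    proof -
      have "s p \<in> G \<longleftrightarrow> s p ` K \<subseteq> V" using sp[OF p] by (simp add: G)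
      moreover have "\<forall>t\<in>K. s p t = h (t, p)" using K(2) by (auto simp: s_def)
      ultimately show ?thesis by (simp add: image_subset_iff)
    qed
    have eq: "{p \<in> topspace ?P. s p \<in> G} = {p \<in> topspace ?P. \<forall>t\<in>K. h (t, p) \<in> V}"
    proof (rule Collect_cong)
      fix p show "(p \<in> topspace ?P \<and> s p \<in> G) = (p \<in> topspace ?P \<and> (\<forall>t\<in>K. h (t, p) \<in> V))"
        using pe by blast
    qed
    have oS: "openin ?P {p \<in> topspace ?P. \<forall>t\<in>K. h (t, p) \<in> V}"
    proof (rule openin_subopen[THEN iffD2], intro ballI)
      fix p assume pS: "p \<in> {p \<in> topspace ?P. \<forall>t\<in>K. h (t, p) \<in> V}"
      then have p: "p \<in> topspace ?P" by simp
      have "mo ?P p \<subseteq> {p \<in> topspace ?P. \<forall>t\<in>K. h (t, p) \<in> V}"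
      proof
        fix q assume q: "q \<in> mo ?P p"
        then have qP: "q \<in> topspace ?P" and qp: "sle ?P q p" by (auto simp: mo_def)
        have "h (t, q) \<in> V" if tK: "t \<in> K" for t
        proof -
          have oH: "openin ?T {x \<in> topspace ?T. h x \<in> V}"
            using openin_continuous_map_preimage[OF conth V] .
          have t01: "t \<in> {0..1}" using tK K(2) by blast
          have hV: "h (t, p) \<in> V" using pS tK by blast
          have mem: "(t, p) \<in> {x \<in> topspace ?T. h x \<in> V}" using t01 p hV by simp
          have "\<exists>A B. openin (top_of_set {0..1}) A \<and> openin ?P B \<and> t \<in> A \<and> p \<in> B \<and>
              A \<times> B \<subseteq> {x \<in> topspace ?T. h x \<in> V}"
            using oH[unfolded openin_prod_topology_alt, rule_format, OF mem] .
          then obtain A B where AB: "openin (top_of_set {0..1}) A" "openin ?P B" "t \<in> A" "p \<in> B"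
            "A \<times> B \<subseteq> {x \<in> topspace ?T. h x \<in> V}"
            by blast
          have "q \<in> B" using qp AB(2,4) unfolding sle_def by blast
          then have "(t, q) \<in> A \<times> B" using AB(3) by simp
          with AB(5) have "(t, q) \<in> {x \<in> topspace ?T. h x \<in> V}" by (rule subsetD)
          then show ?thesis by (simp only: mem_Collect_eq)
        qed
        then show "q \<in> {p \<in> topspace ?P. \<forall>t\<in>K. h (t, p) \<in> V}" using qP by blast
      qed
      moreover have "openin ?P (mo ?P p)" using openin_mo[OF finP p] .
      moreover have "p \<in> mo ?P p" using p by (simp add: mo_def)
      ultimately show "\<exists>T. openin ?P T \<and> p \<in> T \<and> T \<subseteq> {p \<in> topspace ?P. \<forall>t\<in>K. h (t, p) \<in> V}"
        by (intro exI[of _ "mo ?P p"] conjI)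
    qed
    show ?case using oS eq by (simp only:)
  qed
  have conts: "continuous_map ?P (path_space Y) s"
    unfolding continuous_map_def
  proof (intro conjI allI impI)
    show "s \<in> topspace ?P \<rightarrow> topspace (path_space Y)"
    proof
      fix p assume "p \<in> topspace ?P"
      then show "s p \<in> topspace (path_space Y)" using sp by (simp add: topspace_path_space)
    qed
    fix G assume "openin (path_space Y) G"
    then have "generate_topology_on ?S G"
      unfolding path_space_def openin_topology_generated_by_iff .
    then show "openin ?P {p \<in> topspace ?P. s p \<in> G}" by (rule pre)
  qed
  show ?thesis unfolding has_motion_planner_def
    by (intro exI[of _ s] conjI ballI conts) (simp_all add: s_def h0 h1)
qed



lemma prod_open_down:
  assumes U: "openin (prod_topology Y Y) U" and pq: "(p, q) \<in> U" and xp: "sle Y x p" and yq: "sle Y y q"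
  shows "(x, y) \<in> U"
proof -
  have "\<exists>A B. openin Y A \<and> openin Y B \<and> p \<in> A \<and> q \<in> B \<and> A \<times> B \<subseteq> U"
    using U[unfolded openin_prod_topology_alt, rule_format, OF pq] .
  then obtain A B where AB: "openin Y A" "openin Y B" "p \<in> A" "q \<in> B" "A \<times> B \<subseteq> U" by blast
  have "x \<in> A" using xp AB(1,3) unfolding sle_def by blast
  moreover have "y \<in> B" using yq AB(2,4) unfolding sle_def by blast
  ultimately show ?thesis using AB(5) by blast
qed

lemma susp_cases:
  assumes "y \<in> topspace (nh_suspension X)"
  obtains x where "y = Inl x" "x \<in> topspace X" | u where "y = Inr u"
  using assms by (auto simp: topspace_susp)

lemma two_max_contractible:
  fixes X :: "'a topology"
  assumes ne: "topspace X \<noteq> {}"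
    and U: "openin (prod_topology (nh_suspension X) (nh_suspension X)) U"
    and pl: "has_motion_planner (nh_suspension X) U"
    and m1: "(Inr u1, Inr v1) \<in> U" and m2: "(Inr u2, Inr v2) \<in> U" and d: "(u1, v1) \<noteq> (u2, v2)"
  shows "contractible_space (nh_suspension X)"
proof -
  let ?Y = "nh_suspension X"
  let ?P = "subtopology (prod_topology ?Y ?Y) U"
  have hom: "homotopic_with (\<lambda>x. True) ?P ?Y fst snd" using planner_homotopic[OF pl] .
  obtain x0 where x0: "x0 \<in> topspace X" using ne by blast
  have z: "Inl x0 \<in> topspace ?Y" using x0 by (simp add: topspace_susp)
  show ?thesis
  proof (cases "u1 = u2")
    case False
    define j where "j y = (y, Inl x0 :: 'a + bool)" for y :: "'a + bool"
    have jU: "j y \<in> U" if y: "y \<in> topspace ?Y" for y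
      using y
    proof (cases rule: susp_cases)
      case (1 x)
      have "sle ?Y y (Inr u1)" using 1 by (simp add: sle_susp_lr)
      moreover have "sle ?Y (Inl x0) (Inr v1)" using x0 by (simp add: sle_susp_lr)
      ultimately show ?thesis unfolding j_def by (rule prod_open_down[OF U m1])
    next
      case (2 u)
      then have "u = u1 \<or> u = u2" using False by blast
      then show ?thesis
      proof
        assume "u = u1"
        then have "sle ?Y y (Inr u1)" using 2 by simp
        moreover have "sle ?Y (Inl x0) (Inr v1)" using x0 by (simp add: sle_susp_lr)
        ultimately show ?thesis unfolding j_def by (rule prod_open_down[OF U m1])
      next
        assume "u = u2"
        then have "sle ?Y y (Inr u2)" using 2 by simp
        moreover have "sle ?Y (Inl x0) (Inr v2)" using x0 by (simp add: sle_susp_lr)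
        ultimately show ?thesis unfolding j_def by (rule prod_open_down[OF U m2])
      qed
    qed
    have cj0: "continuous_map ?Y (prod_topology ?Y ?Y) j"
      unfolding j_def using z by (intro continuous_map_pairedI) (simp_all add: continuous_map_id[unfolded id_def])
    have cj: "continuous_map ?Y ?P j"
      by (rule continuous_map_into_subtopology[OF cj0]) (use jU in blast)
    have "homotopic_with (\<lambda>x. True) ?Y ?Y (fst \<circ> j) (snd \<circ> j)"
      by (rule homotopic_with_compose_continuous_map_right[OF hom cj]) simp
    moreover have "fst \<circ> j = id" "snd \<circ> j = (\<lambda>y. Inl x0)" by (auto simp: j_def)
    ultimately show ?thesis unfolding contractible_space_def by metis
  next
    case True
    then have vv: "v1 \<noteq> v2" using d by blast
    define j where "j y = (Inr u1 :: 'a + bool, y)" for y :: "'a + bool"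
    have jU: "j y \<in> U" if y: "y \<in> topspace ?Y" for y
      using y
    proof (cases rule: susp_cases)
      case (1 x)
      have "sle ?Y y (Inr v1)" using 1 by (simp add: sle_susp_lr)
      then show ?thesis unfolding j_def by (rule prod_open_down[OF U m1 sle_refl])
    next
      case (2 v)
      then have "v = v1 \<or> v = v2" using vv by blast
      then show ?thesis
      proof
        assume "v = v1"
        then show ?thesis unfolding j_def using m1 2 by simp
      next
        assume "v = v2"
        then show ?thesis unfolding j_def using m2 2 True by simp
      qed
    qed
    have u1Y: "Inr u1 \<in> topspace ?Y" by (simp add: topspace_susp)
    have cj0: "continuous_map ?Y (prod_topology ?Y ?Y) j"
      unfolding j_def using u1Y by (intro continuous_map_pairedI) (simp_all add: continuous_map_id[unfolded id_def])
    have cj: "continuous_map ?Y ?P j"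
      by (rule continuous_map_into_subtopology[OF cj0]) (use jU in blast)
    have "homotopic_with (\<lambda>x. True) ?Y ?Y (fst \<circ> j) (snd \<circ> j)"
      by (rule homotopic_with_compose_continuous_map_right[OF hom cj]) simp
    moreover have "fst \<circ> j = (\<lambda>y. Inr u1)" "snd \<circ> j = id" by (auto simp: j_def)
    ultimately have "homotopic_with (\<lambda>x. True) ?Y ?Y (\<lambda>y. Inr u1) id" by metis
    then show ?thesis unfolding contractible_space_def using homotopic_with_sym by metis
  qed
qed

lemma tc_cover_lower:
  fixes X :: "'a topology"
  assumes ne: "topspace X \<noteq> {}" and nc: "\<not> contractible_space (nh_suspension X)"
    and tc: "tc_cover (nh_suspension X) k"
  shows "4 \<le> k"
proof -
  let ?Y = "nh_suspension X"
  obtain U where U: "\<And>i. i < k \<Longrightarrow> openin (prod_topology ?Y ?Y) (U i) \<and> has_motion_planner ?Y (U i)"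
    and cov: "topspace (prod_topology ?Y ?Y) \<subseteq> (\<Union>i<k. U i)"
    using tc unfolding tc_cover_def by blast
  define g where "g = (\<lambda>(u::bool, v::bool). (Inr u :: 'a + bool, Inr v :: 'a + bool))"
  define M where "M = g ` UNIV"
  have injg: "inj g" unfolding g_def inj_def by auto
  have cardM: "card M = 4" unfolding M_def using injg
    by (simp add: card_image card_UNIV_bool)
  have "\<forall>m\<in>M. \<exists>i. i < k \<and> m \<in> U i"
  proof
    fix m assume "m \<in> M"
    then have "m \<in> topspace (prod_topology ?Y ?Y)" by (auto simp: M_def g_def topspace_susp)
    then show "\<exists>i. i < k \<and> m \<in> U i" using cov by blast
  qed
  then obtain f where f: "\<And>m. m \<in> M \<Longrightarrow> f m < k \<and> m \<in> U (f m)" by metis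
  have "inj_on f M"
  proof (rule inj_onI)
    fix m1 m2 assume m: "m1 \<in> M" "m2 \<in> M" "f m1 = f m2"
    show "m1 = m2"
    proof (rule ccontr)
      assume ne12: "m1 \<noteq> m2"
      obtain u1 v1 where 1: "m1 = (Inr u1, Inr v1)" using m(1) by (auto simp: M_def g_def)
      obtain u2 v2 where 2: "m2 = (Inr u2, Inr v2)" using m(2) by (auto simp: M_def g_def)
      let ?i = "f m1"
      have i: "?i < k" "m1 \<in> U ?i" "m2 \<in> U ?i" using f m by (metis)+
      have "contractible_space ?Y"
      proof (rule two_max_contractible[OF ne])
        show "openin (prod_topology ?Y ?Y) (U ?i)" "has_motion_planner ?Y (U ?i)" using U i(1) by blast+
        show "(Inr u1, Inr v1) \<in> U ?i" using i 1 by simp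
        show "(Inr u2, Inr v2) \<in> U ?i" using i 2 by simp
        show "(u1, v1) \<noteq> (u2, v2)" using ne12 1 2 by auto
      qed
      then show False using nc by blast
    qed
  qed
  moreover have "f ` M \<subseteq> {..<k}" using f by auto
  ultimately have "card M \<le> card {..<k}" by (metis card_inj_on_le finite_lessThan)
  then show ?thesis using cardM by simp
qed

theorem theorem2:
  fixes X :: "'a topology"
  assumes "finite (topspace X)" and "topspace X \<noteq> {}" and "t0_space X"
  shows "(contractible_space X \<longrightarrow> TC (nh_suspension X) = 1)
       \<and> (\<not> contractible_space X \<longrightarrow> TC (nh_suspension X) = 4)"
proof -
  note fin = assms(1) and ne = assms(2) and t0 = assms(3)
  let ?Y = "nh_suspension X"
  let ?P = "prod_topology ?Y ?Y"
  have finY: "finite (topspace ?Y)" using finite_susp[OF fin] .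
  have ceq: "contractible_space ?Y \<longleftrightarrow> contractible_space X" using susp_contractible[OF fin ne t0] .
  have neP: "(Inr False, Inr False) \<in> topspace ?P" by (auto simp: topspace_susp)
  have no0: "\<not> tc_cover ?Y 0"
    unfolding tc_cover_def using neP by auto
  obtain x0 where x0: "x0 \<in> topspace X" using ne by blast
  have z: "Inl x0 \<in> topspace ?Y" using x0 by (simp add: topspace_susp)
  show ?thesis
  proof (intro conjI impI)
    assume cX: "contractible_space X"
    then have cY: "contractible_space ?Y" using ceq by simp
    then obtain c where hc: "homotopic_with (\<lambda>x. True) ?Y ?Y id (\<lambda>x. c)"
      unfolding contractible_space_def by blast
    have h1: "homotopic_with (\<lambda>x. True) ?P ?Y (id \<circ> fst) ((\<lambda>x. c) \<circ> fst)"
      by (rule homotopic_with_compose_continuous_map_right[OF hc continuous_map_fst]) simp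
    have h2: "homotopic_with (\<lambda>x. True) ?P ?Y (id \<circ> snd) ((\<lambda>x. c) \<circ> snd)"
      by (rule homotopic_with_compose_continuous_map_right[OF hc continuous_map_snd]) simp
    have "homotopic_with (\<lambda>x. True) ?P ?Y fst snd"
      using homotopic_with_trans[OF h1[simplified o_def id_def] homotopic_with_symD[OF h2[simplified o_def id_def]]]
      by (simp add: o_def)
    then have "homotopic_with (\<lambda>x. True) (subtopology ?P (topspace ?P)) ?Y fst snd"
      by (simp only: subtopology_topspace)
    then have pl: "has_motion_planner ?Y (topspace ?P)" by (rule homotopic_planner[OF finY])
    have tc1: "tc_cover ?Y 1" unfolding tc_cover_def
    proof (intro exI[of _ "\<lambda>i. topspace ?P"] conjI allI impI)
      fix i :: nat
      show "openin ?P (topspace ?P)" by (rule openin_topspace)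
      show "has_motion_planner ?Y (topspace ?P)" by (rule pl)
    next
      have l1: "{..<1::nat} = {0}" by auto
      show "topspace ?P \<subseteq> (\<Union>i<(1::nat). topspace ?P)" unfolding l1 by simp
    qed
    show "TC ?Y = 1" unfolding TC_def
    proof (rule Least_equality)
      show "tc_cover ?Y 1" by (rule tc1)
      fix k assume "tc_cover ?Y k"
      then show "1 \<le> k" using no0 by (cases k) auto
    qed
  next
    assume ncX: "\<not> contractible_space X"
    then have ncY: "\<not> contractible_space ?Y" using ceq by simp
    define bv where "bv y = (case y of Inl _ \<Rightarrow> True | Inr u \<Rightarrow> u)" for y :: "'a + bool"
    have bvle: "sle ?Y y (Inr (bv y))" if "y \<in> topspace ?Y" for y
      using that by (cases rule: susp_cases) (simp_all add: bv_def sle_susp_lr)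
    define pt1 where "pt1 i = (Inr (odd i) :: 'a + bool)" for i :: nat
    define pt2 where "pt2 i = (Inr (2 \<le> i) :: 'a + bool)" for i :: nat
    define W where "W i = mo ?Y (pt1 i) \<times> mo ?Y (pt2 i)" for i
    have pt: "pt1 i \<in> topspace ?Y" "pt2 i \<in> topspace ?Y" for i by (simp_all add: pt1_def pt2_def topspace_susp)
    have oW: "openin ?P (W i)" for i
      unfolding W_def
      by (rule openin_prod_Times_iff[THEN iffD2], intro disjI2 conjI openin_mo[OF finY pt(1)] openin_mo[OF finY pt(2)])
    have plW: "has_motion_planner ?Y (W i)" for i
    proof (rule homotopic_planner[OF finY])
      let ?S = "subtopology ?P (W i)"
      have cf: "continuous_map ?S ?Y fst" by (rule continuous_map_subtopology_fst)
      have cs: "continuous_map ?S ?Y snd" by (rule continuous_map_subtopology_snd)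
      have cp: "continuous_map ?S ?Y (\<lambda>x. pt1 i)" "continuous_map ?S ?Y (\<lambda>x. pt2 i)"
        "continuous_map ?S ?Y (\<lambda>x. Inl x0)" using pt z by simp_all
      have tS: "w \<in> topspace ?S \<Longrightarrow> w \<in> W i" for w by simp
      have a1: "homotopic_with (\<lambda>x. True) ?S ?Y fst (\<lambda>x. pt1 i)"
        by (rule homotopic_sle[OF cf cp(1)]) (use tS in \<open>auto simp: W_def mo_def\<close>)
      have a2: "homotopic_with (\<lambda>x. True) ?S ?Y (\<lambda>x. Inl x0) (\<lambda>x. pt1 i)"
        by (rule homotopic_sle[OF cp(3) cp(1)]) (simp add: pt1_def sle_susp_lr x0)
      have a3: "homotopic_with (\<lambda>x. True) ?S ?Y (\<lambda>x. Inl x0) (\<lambda>x. pt2 i)"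
        by (rule homotopic_sle[OF cp(3) cp(2)]) (simp add: pt2_def sle_susp_lr x0)
      have a4: "homotopic_with (\<lambda>x. True) ?S ?Y snd (\<lambda>x. pt2 i)"
        by (rule homotopic_sle[OF cs cp(2)]) (use tS in \<open>auto simp: W_def mo_def\<close>)
      show "homotopic_with (\<lambda>x. True) ?S ?Y fst snd"
        using homotopic_with_trans[OF homotopic_with_trans[OF homotopic_with_trans[OF a1 homotopic_with_symD[OF a2]] a3] homotopic_with_symD[OF a4]] .
    qed
    have cov: "topspace ?P \<subseteq> (\<Union>i<4. W i)"
    proof
      fix w assume w: "w \<in> topspace ?P"
      then obtain a b where ab: "w = (a, b)" "a \<in> topspace ?Y" "b \<in> topspace ?Y" by auto
      define i where "i = (if bv a then 1 else 0) + (if bv b then 2 else (0::nat))"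
      have i4: "i < 4" by (simp add: i_def)
      have "pt1 i = Inr (bv a)" "pt2 i = Inr (bv b)" by (auto simp: pt1_def pt2_def i_def)
      then have "w \<in> W i" using ab bvle by (simp add: W_def mo_def)
      then show "w \<in> (\<Union>i<4. W i)" using i4 by blast
    qed
    have tc4: "tc_cover ?Y 4" unfolding tc_cover_def
      by (rule exI[of _ W]) (use oW plW cov in blast)
    show "TC ?Y = 4" unfolding TC_def
    proof (rule Least_equality)
      show "tc_cover ?Y 4" by (rule tc4)
      fix k assume "tc_cover ?Y k"
      then show "4 \<le> k" by (rule tc_cover_lower[OF ne ncY])
    qed
  qed
qed


end
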